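(* Let $a>b\geq 1$ be coprime integers and $p=a/b$ (so $p>1$). Let $\hat n$ be a positive integer, let $N=(2^b+2)\hat n$, and let $S$ be the multiset of binary strings of length $N$ consisting of one copy of $\mathbf{1}_{(2^b+1)\hat n}\circ\mathbf{0}_{\hat n}$ and $2^{a-b}$ copies of $\mathbf{0}_{N}$. For every string $s^*\in\{0,1\}^{N}$: (1) if $d(s^*,\mathbf{0}_N)=\hat n$ and $\mathrm{hs}(s^*,\mathbf{0}_N)\subseteq[(2^b+1)\hat n]$, then $\sum_{s\in S} d(s^*,s)^p=(2^a+2^{a-b})\hat n^{p}$; (2) if $d(s^*,\mathbf{0}_N)\neq\hat n$ or $\mathrm{hs}(s^*,\mathbf{0}_N)\not\subseteq[(2^b+1)\hat n]$, then $\sum_{s\in S} d(s^*,s)^p>(2^a+2^{a-b})\hat n^{p}$. (Sums over $S$ count multiplicities.)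
   Context: For binary strings $s,s'$ of equal length $n$, $d(s,s')$ denotes their Hamming distance (number of positions where they differ) and $\mathrm{hs}(s,s')=\{j\in[n]: s[j]\neq s'[j]\}$ is their Hamming set. $[t]=\{1,\dots,t\}$. $\mathbf{0}_\ell$ and $\mathbf{1}_\ell$ denote the all-zero and all-one strings of length $\ell$, and $\circ$ denotes concatenation. *)

theory Defs
  imports Complex_Main "HOL-Library.Multiset"
begin

text \<open>Binary strings of length n are modelled as bool lists of length n (True = 1).
  Positions are 1-indexed as in the paper.\<close>

definition hamming_set :: "bool list \<Rightarrow> bool list \<Rightarrow> nat set" where
  "hamming_set s t = {j \<in> {1..length s}. s ! (j - 1) \<noteq> t ! (j - 1)}"

definition hamming_dist :: "bool list \<Rightarrow> bool list \<Rightarrow> nat" where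
  "hamming_dist s t = card (hamming_set s t)"

definition zeros :: "nat \<Rightarrow> bool list" where
  "zeros l = replicate l False"

definition ones :: "nat \<Rightarrow> bool list" where
  "ones l = replicate l True"

end

theory Submission imports Defs begin
lemma tangent:
  fixes u v p :: real
  assumes "u \<ge> 0" "v > 0" "u \<noteq> v" "p > 1"
  shows "u powr p > v powr p + p * v powr (p - 1) * (u - v)"
proof (cases "u = 0")
  case True
  have "v powr p = v powr (p-1) * v" using assms by (simp add: powr_diff)
  moreover have "v powr (p-1) > 0" using assms by simp
  ultimately show ?thesis using True assms by (simp add: algebra_simps)
next
  case False
  hence u: "u > 0" using assms by simp
  have D: "\<And>x. x > 0 \<Longrightarrow> DERIV (\<lambda>z. z powr p) x :> p * x powr (p - 1)"
    by (rule has_real_derivative_powr) 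
  show ?thesis
  proof (cases "u > v")
    case True
    obtain z where z: "z > v" "z < u" "u powr p - v powr p = (u - v) * (p * z powr (p - 1))"
      using MVT2[of v u "\<lambda>z. z powr p" "\<lambda>x. p * x powr (p - 1)"] True D assms by force
    have "v powr (p-1) < z powr (p-1)" using z assms by (intro powr_less_mono2) auto
    hence "p * v powr (p-1) * (u - v) < p * z powr (p-1) * (u-v)" using True assms by simp
    thus ?thesis using z by (simp add: algebra_simps)
  next
    case False
    hence uv: "u < v" using assms by simp
    obtain z where z: "z > u" "z < v" "v powr p - u powr p = (v - u) * (p * z powr (p - 1))"
      using MVT2[of u v "\<lambda>z. z powr p" "\<lambda>x. p * x powr (p - 1)"] uv D u by force
    have "z powr (p-1) < v powr (p-1)" using z assms u by (intro powr_less_mono2) auto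
    hence "p * z powr (p-1) * (v - u) < p * v powr (p-1) * (v-u)" using uv assms by simp
    thus ?thesis using z by (simp add: algebra_simps)
  qed
qed
lemma phi_strict:
  fixes c n B p k :: real
  assumes "n > 0" "B > 0" "c > 0" "p > 1" "B powr (p - 1) = c" "0 \<le> k" "k \<le> (B+1)*n" "k \<noteq> n"
  shows "c * k powr p + ((B+1)*n - k) powr p > c * n powr p + (B*n) powr p"
proof -
  have 1: "k powr p > n powr p + p * n powr (p-1) * (k - n)"
    using tangent[of k n p] assms by auto
  have 2: "((B+1)*n - k) powr p > (B*n) powr p + p * (B*n) powr (p-1) * (((B+1)*n - k) - B*n)"
    using tangent[of "(B+1)*n - k" "B*n" p] assms by (auto simp: algebra_simps)
  have 3: "(B*n) powr (p-1) = c * n powr (p-1)"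
    using assms by (simp add: powr_mult)
  have "c * k powr p > c * (n powr p + p * n powr (p-1) * (k - n))"
    using 1 assms by simp
  thus ?thesis using 2 3 by (simp add: algebra_simps)
qed

lemma phi_le:
  fixes c n B p k :: real
  assumes "n > 0" "B > 0" "c > 0" "p > 1" "B powr (p - 1) = c" "0 \<le> k" "k \<le> (B+1)*n"
  shows "c * k powr p + ((B+1)*n - k) powr p \<ge> c * n powr p + (B*n) powr p"
  using phi_strict[OF assms] by (cases "k = n") (auto simp: algebra_simps)
lemma counts:
  fixes s :: "bool list"
  assumes "length s = M + n"
  defines "H \<equiv> hamming_set s (zeros (M+n))"
  shows "hamming_dist s (zeros (M+n)) = card (H \<inter> {1..M}) + card (H - {1..M})"
    and "hamming_dist s (ones M @ zeros n) = (M - card (H \<inter> {1..M})) + card (H - {1..M})"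
    and "card (H \<inter> {1..M}) \<le> M"
proof -
  have H: "H = {j\<in>{1..M+n}. s!(j-1)}" using assms by (auto simp: hamming_set_def zeros_def)
  have fin: "finite H" using H by simp
  have "H = (H \<inter> {1..M}) \<union> (H - {1..M})" by blast
  hence "card H = card (H \<inter> {1..M}) + card (H - {1..M})"
    using fin by (metis card_Un_disjoint finite_Diff finite_Int Diff_disjoint Int_Diff_disjoint inf_commute)
  thus "hamming_dist s (zeros (M+n)) = card (H \<inter> {1..M}) + card (H - {1..M})"
    by (simp add: hamming_dist_def H_def)
  have T: "hamming_set s (ones M @ zeros n) = ({1..M} - (H \<inter> {1..M})) \<union> (H - {1..M})"
    unfolding H using assms
    by (auto simp: hamming_set_def ones_def zeros_def nth_append)
  have "card (({1..M} - (H \<inter> {1..M})) \<union> (H - {1..M})) = card ({1..M} - (H \<inter> {1..M})) + card (H - {1..M})"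
    using fin by (intro card_Un_disjoint) auto
  also have "card ({1..M} - (H \<inter> {1..M})) = M - card (H \<inter> {1..M})"
    by (subst card_Diff_subset) auto
  finally show "hamming_dist s (ones M @ zeros n) = (M - card (H \<inter> {1..M})) + card (H - {1..M})"
    by (simp add: hamming_dist_def T)
  show "card (H \<inter> {1..M}) \<le> M"
    by (metis card_atLeastAtMost card_mono finite_atLeastAtMost inf_le2 diff_Suc_1)
qed
theorem lemma1:
  fixes a b nh :: nat
  assumes "b \<ge> 1" and "a > b" and "coprime a b" and "nh > 0"
  defines "p \<equiv> real a / real b"
      and "N \<equiv> (2 ^ b + 2) * nh"
      and "S \<equiv> add_mset (ones ((2 ^ b + 1) * nh) @ zeros nh)
                 (replicate_mset (2 ^ (a - b)) (zeros ((2 ^ b + 2) * nh)))"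
  assumes "length s' = N"
  shows "(hamming_dist s' (zeros N) = nh \<and> hamming_set s' (zeros N) \<subseteq> {1..(2 ^ b + 1) * nh}
            \<longrightarrow> (\<Sum>s\<in>#S. real (hamming_dist s' s) powr p) = (2 ^ a + 2 ^ (a - b)) * real nh powr p)
       \<and> (hamming_dist s' (zeros N) \<noteq> nh \<or> \<not> hamming_set s' (zeros N) \<subseteq> {1..(2 ^ b + 1) * nh}
            \<longrightarrow> (\<Sum>s\<in>#S. real (hamming_dist s' s) powr p) > (2 ^ a + 2 ^ (a - b)) * real nh powr p)"
proof -
  define M where "M = (2 ^ b + 1) * nh"
  have NM: "N = M + nh" unfolding N_def M_def by (simp add: algebra_simps)
  define H where "H = hamming_set s' (zeros (M + nh))"
  define x where "x = card (H \<inter> {1..M})"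
  define y where "y = card (H - {1..M})"
  have len: "length s' = M + nh" using assms NM by simp
  note C = counts[OF len, folded H_def x_def y_def]
  have finH: "finite H" unfolding H_def hamming_set_def by simp
  have S': "S = add_mset (ones M @ zeros nh) (replicate_mset (2 ^ (a - b)) (zeros N))"
    unfolding S_def M_def N_def by simp
  define c :: real where "c = 2 ^ (a - b)"
  define B :: real where "B = 2 ^ b"
  have p1: "p > 1" unfolding p_def using assms by simp
  have Bp: "B powr (p - 1) = c"
  proof -
    have "B powr (p - 1) = 2 powr (real b * (p - 1))" unfolding B_def
      by (simp add: powr_realpow[symmetric] powr_powr)
    also have "real b * (p - 1) = real (a - b)" unfolding p_def using assms by (simp add: field_simps)
    finally show ?thesis unfolding c_def by (simp add: powr_realpow)
  qed
  have Bp2: "(B * real nh) powr p = 2 ^ a * real nh powr p"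
  proof -
    have "B powr p = 2 powr (real b * p)" unfolding B_def
      by (simp add: powr_realpow[symmetric] powr_powr)
    also have "real b * p = real a" unfolding p_def using assms by simp
    finally show ?thesis by (simp add: powr_mult powr_realpow)
  qed
  have Mr: "real M = (B + 1) * real nh" unfolding M_def B_def by (simp add: algebra_simps)
  have sum: "(\<Sum>s\<in>#S. real (hamming_dist s' s) powr p)
      = c * real (x + y) powr p + (real M - real x + real y) powr p"
  proof -
    have d1: "real (hamming_dist s' (ones M @ zeros nh)) = real M - real x + real y"
      using C(2,3) by (simp add: of_nat_diff)
    show ?thesis using C(1) d1 unfolding S' NM c_def by simp
  qed
  have rhs: "(2 ^ a + 2 ^ (a - b)) * real nh powr p = c * real nh powr p + (B * real nh) powr p"
    using Bp2 unfolding c_def by (simp add: algebra_simps)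
  have cond: "(hamming_dist s' (zeros N) = nh \<and> hamming_set s' (zeros N) \<subseteq> {1..M})
       \<longleftrightarrow> (x + y = nh \<and> y = 0)"
    using C finH unfolding NM H_def[symmetric] y_def by auto
  have cond2: "(hamming_dist s' (zeros N) \<noteq> nh \<or> \<not> hamming_set s' (zeros N) \<subseteq> {1..M})
       \<longleftrightarrow> \<not> (x + y = nh \<and> y = 0)"
    using cond by blast
  have pos: "nh > 0" "B > 0" "c > 0" using assms unfolding B_def c_def by auto
  show ?thesis
    unfolding M_def[symmetric] sum rhs cond cond2
  proof (intro conjI impI)
    assume h: "x + y = nh \<and> y = 0"
    show "c * real (x + y) powr p + (real M - real x + real y) powr p = c * real nh powr p + (B * real nh) powr p"
    proof -
      have "x = nh" "y = 0" using h by auto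
      moreover have "real M - real nh + 0 = B * real nh" using Mr by (simp add: algebra_simps)
      ultimately show ?thesis by simp
    qed
  next
    assume ne: "\<not> (x + y = nh \<and> y = 0)"
    show "c * real (x + y) powr p + (real M - real x + real y) powr p > c * real nh powr p + (B * real nh) powr p"
    proof (cases "x + y \<le> M")
      case True
      have le: "c * real (x + y) powr p + (real M - real (x + y)) powr p \<le> c * real (x + y) powr p + (real M - real x + real y) powr p"
        using True p1 by (auto intro!: powr_mono2)
      show ?thesis
      proof (cases "y = 0")
        case True
        hence "x + y \<noteq> nh" using ne by simp
        then show ?thesis using phi_strict[of "real nh" B c p "real (x+y)"] pos p1 Bp \<open>x + y \<le> M\<close> Mr True
          by simp
      next
        case False
        have "(real M - real (x + y)) powr p < (real M - real x + real y) powr p"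
          using False \<open>x + y \<le> M\<close> p1 by (intro powr_less_mono2) auto
        moreover have "c * real (x + y) powr p + (real M - real (x + y)) powr p \<ge> c * real nh powr p + (B * real nh) powr p"
          using phi_le[of "real nh" B c p "real (x+y)"] pos p1 Bp \<open>x + y \<le> M\<close> Mr by simp
        ultimately show ?thesis by simp
      qed
    next
      case False
      have "c * real M powr p \<ge> c * real nh powr p + (B * real nh) powr p"
        using phi_le[of "real nh" B c p "real M"] pos p1 Bp Mr by simp
      moreover have "real M powr p < real (x + y) powr p"
        using False p1 by (intro powr_less_mono2) auto
      hence "c * real M powr p < c * real (x + y) powr p" using pos(3) by simp
      moreover have "(real M - real x + real y) powr p \<ge> 0" by simp
      ultimately show ?thesis by linarith
    qed
  qed
qed
end
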